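(* Let $l$ and $r$ be positive integers with $l\geq 2r$, and let $f$ be a real function on the nonnegative integers with $f(n)=a_ln^l+a_{l-1}n^{l-1}+\cdots+a_{l-2r}n^{l-2r}+o(n^{l-2r})$ as $n\to\infty$, where $a_l,\ldots,a_{l-2r}$ are real constants and $a_l\neq 0$. Then for every $1\leq j\leq r$ there are real numbers $z_{3,j},\ldots,z_{2(r-j+1),j}$ such that $$\left(\mathcal R^2\widehat{\mathcal L}^{j-1}f\right)(n)=1+\frac{2^j-2^{j-1}l-2}{n^2}+\sum_{i=3}^{2(r-j+1)}\frac{z_{i,j}}{n^i}+o\!\left(\frac{1}{n^{2(r-j+1)}}\right)\quad(n\to\infty).$$
   Context: For a real function (sequence) $g$ on the nonnegative integers, $(\widehat{\mathcal L}g)(n)=g(n+1)^2-g(n)g(n+2)$, $\widehat{\mathcal L}^0 g=g$ and $\widehat{\mathcal L}^jg=\widehat{\mathcal L}(\widehat{\mathcal L}^{j-1}g)$; and $(\mathcal R^2g)(n)=\frac{g(n)g(n+2)}{g(n+1)^2}$ (defined for $n$ large enough that $g(n+1)\ne0$). *)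

theory Defs
  imports Complex_Main "HOL-Library.Landau_Symbols"
begin

definition Lhat :: "(nat \<Rightarrow> real) \<Rightarrow> nat \<Rightarrow> real" where
  "Lhat g n = g (n + 1) ^ 2 - g n * g (n + 2)"

definition R2 :: "(nat \<Rightarrow> real) \<Rightarrow> nat \<Rightarrow> real" where
  "R2 g n = g n * g (n + 2) / g (n + 1) ^ 2"

end

theory Submission
  imports Defs "HOL-Computational_Algebra.Polynomial" "HOL-Real_Asymp.Real_Asymp"
begin

definition shp :: "real \<Rightarrow> real poly \<Rightarrow> real poly" where
  "shp c P = pcompose P [:c, 1:]"
definition dl :: "real poly \<Rightarrow> real poly" where
  "dl P = shp 1 P - P"
definition LP :: "real poly \<Rightarrow> real poly" where
  "LP P = (shp 1 P)^2 - P * shp 2 P"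

lemma poly_shp[simp]: "poly (shp c P) x = poly P (c + x)"
  by (simp add: shp_def poly_pcompose)
lemma poly_dl[simp]: "poly (dl P) x = poly P (1 + x) - poly P x"
  by (simp add: dl_def)
lemma poly_LP[simp]: "poly (LP P) x = poly P (1 + x)^2 - poly P x * poly P (2 + x)"
  by (simp add: LP_def)

lemma shp_coeff:
  assumes "degree P \<le> e"
  shows "degree (shp c P) \<le> e \<and> coeff (shp c P) e = coeff P e"
proof (cases "degree P = e")
  case True
  then show ?thesis using lead_coeff_comp[of "[:c,1:]" P]
    by (simp add: shp_def degree_pcompose)
next
  case False
  then have "degree P < e" using assms by simp
  then show ?thesis by (simp add: shp_def degree_pcompose coeff_eq_0)
qed

lemma dl_pCons: "dl (pCons a Q) = shp 1 Q + pCons 0 (dl Q)"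
proof -
  have "poly (dl (pCons a Q)) = poly (shp 1 Q + pCons 0 (dl Q))"
    by (simp add: fun_eq_iff algebra_simps)
  then show ?thesis by (simp add: poly_eq_poly_eq_iff)
qed

lemma dl_coeff:
  "degree P \<le> d \<Longrightarrow> degree (dl P) \<le> d - 1 \<and> coeff (dl P) (d - 1) = real d * coeff P d"
proof (induction P arbitrary: d)
  case 0
  then show ?case by (simp add: dl_def shp_def)
next
  case (pCons a Q)
  have dQ: "degree Q \<le> d - 1" using pCons.prems pCons.hyps
    by (cases "Q = 0") auto
  show ?case
  proof (cases d)
    case 0
    then have "Q = 0" using dQ pCons.prems pCons.hyps by (auto simp: degree_pCons_eq_if split: if_splits)
    then show ?thesis using 0 by (simp add: dl_pCons dl_def shp_def)
  next
    case (Suc e)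
    have IH: "degree (dl Q) \<le> e - 1 \<and> coeff (dl Q) (e - 1) = real e * coeff Q e"
      using pCons.IH[of e] dQ Suc by simp
    have S: "degree (shp 1 Q) \<le> e \<and> coeff (shp 1 Q) e = coeff Q e"
      using shp_coeff[of Q e 1] dQ Suc by simp
    show ?thesis
    proof (cases e)
      case 0
      then have "degree Q = 0" using dQ Suc by simp
      have "lead_coeff (dl Q) = 0" using IH 0 by simp
      then have "dl Q = 0" by simp
      then show ?thesis using S Suc 0 by (simp add: dl_pCons)
    next
      case (Suc e')
      have d1: "degree (pCons 0 (dl Q)) \<le> e"
        using IH Suc by (cases "dl Q = 0") auto
      have c1: "coeff (pCons 0 (dl Q)) e = real e * coeff Q e" using IH Suc by simp
      show ?thesis using S d1 c1 \<open>d = Suc e\<close>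
        by (simp add: dl_pCons degree_add_le algebra_simps)
    qed
  qed
qed

lemma coeff_mult_le:
  fixes p q :: "real poly"
  assumes "degree p \<le> a" "degree q \<le> b"
  shows "coeff (p * q) (a + b) = coeff p a * coeff q b"
proof (cases "degree p = a \<and> degree q = b")
  case True
  then show ?thesis using coeff_mult_degree_sum[of p q] by simp
next
  case False
  then have "degree p + degree q < a + b" using assms by auto
  then have "coeff (p * q) (a + b) = 0"
    using degree_mult_le[of p q] by (intro coeff_eq_0) simp
  moreover have "coeff p a = 0 \<or> coeff q b = 0"
    using False assms by (auto intro!: coeff_eq_0)
  ultimately show ?thesis by auto
qed

lemma LP_alt: "LP P = dl P * shp 1 (dl P) - shp 1 P * dl (dl P)"
proof -
  have "poly (LP P) = poly (dl P * shp 1 (dl P) - shp 1 P * dl (dl P))"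
    by (simp add: fun_eq_iff algebra_simps power2_eq_square)
  then show ?thesis by (simp add: poly_eq_poly_eq_iff)
qed

lemma LP_coeff:
  assumes "degree P = d" "d \<ge> 1"
  shows "degree (LP P) = 2 * d - 2 \<and> coeff (LP P) (2 * d - 2) = real d * lead_coeff P ^ 2"
proof -
  have D1: "degree (dl P) \<le> d - 1" "coeff (dl P) (d - 1) = real d * lead_coeff P"
    using dl_coeff[of P d] assms by auto
  have S1: "degree (shp 1 (dl P)) \<le> d - 1" "coeff (shp 1 (dl P)) (d - 1) = real d * lead_coeff P"
    using shp_coeff[OF D1(1), of 1] D1 by auto
  have T1: "degree (dl P * shp 1 (dl P)) \<le> 2 * d - 2"
    using degree_mult_le[of "dl P" "shp 1 (dl P)"] D1 S1 by linarith
  have T1c: "coeff (dl P * shp 1 (dl P)) (2 * d - 2) = (real d * lead_coeff P)^2"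
  proof -
    have "d - 1 + (d - 1) = 2 * d - 2" using assms by simp
    then show ?thesis using coeff_mult_le[OF D1(1) S1(1)] D1 S1 by (simp add: power2_eq_square)
  qed
  have P1: "degree (shp 1 P) \<le> d" "coeff (shp 1 P) d = lead_coeff P"
    using shp_coeff[of P d 1] assms by auto
  have T2: "degree (shp 1 P * dl (dl P)) \<le> 2 * d - 2 \<and>
     coeff (shp 1 P * dl (dl P)) (2 * d - 2) = lead_coeff P * (real (d - 1) * (real d * lead_coeff P))"
  proof (cases "d = 1")
    case True
    have "degree (dl (dl P)) \<le> 0" "coeff (dl (dl P)) 0 = 0"
      using dl_coeff[OF D1(1)] True D1 by auto
    then have "dl (dl P) = 0" by (metis leading_coeff_0_iff le_zero_eq)
    then show ?thesis using True by simp
  next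
    case False
    have D2: "degree (dl (dl P)) \<le> d - 2" "coeff (dl (dl P)) (d - 2) = real (d - 1) * (real d * lead_coeff P)"
      using dl_coeff[OF D1(1)] D1 by (auto simp: diff_diff_add numeral_2_eq_2)
    have "degree (shp 1 P * dl (dl P)) \<le> 2 * d - 2"
      using degree_mult_le[of "shp 1 P" "dl (dl P)"] D2 P1 False assms by linarith
    moreover have "coeff (shp 1 P * dl (dl P)) (d + (d - 2)) = lead_coeff P * (real (d - 1) * (real d * lead_coeff P))"
      using coeff_mult_le[OF P1(1) D2(1)] P1 D2 by simp
    moreover have "d + (d - 2) = 2 * d - 2" using False assms by simp
    ultimately show ?thesis by simp
  qed
  have dle: "degree (LP P) \<le> 2 * d - 2"
    unfolding LP_alt using T1 T2 by (intro degree_diff_le) auto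
  have c: "coeff (LP P) (2 * d - 2) = real d * lead_coeff P ^ 2"
    unfolding LP_alt using T1c T2 assms
    by (simp add: power2_eq_square of_nat_diff algebra_simps)
  have "lead_coeff P \<noteq> 0" using assms by auto
  then have "coeff (LP P) (2 * d - 2) \<noteq> 0" using c assms by simp
  then have "2 * d - 2 \<le> degree (LP P)" by (rule le_degree)
  then show ?thesis using dle c by simp
qed

lemma poly_sum_le:
  fixes p :: "real poly"
  assumes "degree p \<le> k"
  shows "poly p x = (\<Sum>i\<le>k. coeff p i * x ^ i)"
  unfolding poly_altdef
  by (rule sum.mono_neutral_left) (use assms in \<open>auto simp: coeff_eq_0\<close>)

lemma poly_div_pow_lim:
  assumes "degree p \<le> k"
  shows "((\<lambda>n. poly p (real n) / real n ^ k) \<longlongrightarrow> coeff p k) sequentially"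
proof -
  have ev: "eventually (\<lambda>n. (\<Sum>i\<le>k. coeff p i * (1 / real n) ^ (k - i)) = poly p (real n) / real n ^ k) sequentially"
    using eventually_gt_at_top[of "0::nat"]
  proof eventually_elim
    case (elim n)
    have "poly p (real n) / real n ^ k = (\<Sum>i\<le>k. coeff p i * real n ^ i / real n ^ k)"
      by (simp add: poly_sum_le[OF assms] sum_divide_distrib)
    also have "\<dots> = (\<Sum>i\<le>k. coeff p i * (1 / real n) ^ (k - i))"
    proof (rule sum.cong[OF refl])
      fix i assume "i \<in> {..k}"
      then have "real n ^ k = real n ^ i * real n ^ (k - i)"
        by (simp add: power_add[symmetric])
      then show "coeff p i * real n ^ i / real n ^ k = coeff p i * (1 / real n) ^ (k - i)"
        using elim by (simp add: power_one_over field_simps)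
    qed
    finally show ?case by simp
  qed
  have "((\<lambda>n. \<Sum>i\<le>k. coeff p i * (1 / real n) ^ (k - i)) \<longlongrightarrow> (\<Sum>i\<le>k. coeff p i * 0 ^ (k - i))) sequentially"
    by (intro tendsto_intros lim_inverse_n')
  moreover have "(\<Sum>i\<le>k. coeff p i * (0::real) ^ (k - i)) = coeff p k"
  proof -
    have "(\<Sum>i\<le>k. coeff p i * (0::real) ^ (k - i)) = (\<Sum>i\<in>{k}. coeff p i * (0::real) ^ (k - i))"
      by (rule sum.mono_neutral_right) auto
    then show ?thesis by simp
  qed
  ultimately show ?thesis using ev by (simp add: tendsto_cong)
qed

lemma poly_bigo:
  assumes "degree p \<le> k"
  shows "(\<lambda>n. poly p (real n)) \<in> O(\<lambda>n. real n ^ k)"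
  by (rule bigoI_tendsto[OF poly_div_pow_lim[OF assms]])
     (use eventually_gt_at_top[of "0::nat"] in \<open>eventually_elim, simp\<close>)

lemma poly_ev_nz:
  assumes "p \<noteq> 0"
  shows "eventually (\<lambda>n. poly p (real n) \<noteq> 0) sequentially"
proof -
  have "eventually (\<lambda>n. poly p (real n) / real n ^ degree p \<noteq> 0) sequentially"
    by (rule tendsto_imp_eventually_ne[OF poly_div_pow_lim[OF order.refl]]) (use assms in simp)
  then show ?thesis by eventually_elim auto
qed

lemma ratio_lim:
  assumes "B \<noteq> 0" "degree A \<le> degree B"
  shows "((\<lambda>n. poly A (real n) / poly B (real n)) \<longlongrightarrow> coeff A (degree B) / lead_coeff B) sequentially"
proof -
  have "((\<lambda>n. (poly A (real n) / real n ^ degree B) / (poly B (real n) / real n ^ degree B))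
     \<longlongrightarrow> coeff A (degree B) / lead_coeff B) sequentially"
    by (intro tendsto_divide poly_div_pow_lim assms order.refl) (use assms in simp)
  moreover have "eventually (\<lambda>n. (poly A (real n) / real n ^ degree B) / (poly B (real n) / real n ^ degree B)
     = poly A (real n) / poly B (real n)) sequentially"
    using eventually_gt_at_top[of "0::nat"] by eventually_elim simp
  ultimately show ?thesis by (rule Lim_transform_eventually)
qed

lemma inv_poly_bigo:
  assumes "p \<noteq> 0"
  shows "(\<lambda>n. 1 / poly p (real n)) \<in> O(\<lambda>n. 1 / real n ^ degree p)"
proof (rule bigoI_tendsto)
  have "((\<lambda>n. inverse (poly p (real n) / real n ^ degree p)) \<longlongrightarrow> inverse (lead_coeff p)) sequentially"
    by (intro tendsto_inverse poly_div_pow_lim order.refl) (use assms in simp)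
  then show "((\<lambda>n. 1 / poly p (real n) / (1 / real n ^ degree p)) \<longlongrightarrow> inverse (lead_coeff p)) sequentially"
    by (simp add: field_simps)
  show "eventually (\<lambda>n. 1 / real n ^ degree p \<noteq> 0) sequentially"
    using eventually_gt_at_top[of "0::nat"] by eventually_elim simp
qed

lemma pow_shift_bigo: "(\<lambda>n. real (n + c) ^ k) \<in> O(\<lambda>n. real n ^ k)"
proof -
  have "(\<lambda>n. poly ([:real c, 1:] ^ k) (real n)) \<in> O(\<lambda>n. real n ^ k)"
    by (rule poly_bigo) (use degree_power_le[of "[:real c, 1:]" k] in simp)
  then show ?thesis by (simp add: algebra_simps)
qed

lemma smallo_shift:
  assumes "e \<in> o(\<lambda>n. real n ^ k)"
  shows "(\<lambda>n. e (n + c)) \<in> o(\<lambda>n. real n ^ k)"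
proof -
  have "(\<lambda>n. e (n + c)) \<in> o(\<lambda>n. real (n + c) ^ k)"
    by (rule landau_o.small.compose[OF assms filterlim_add_const_nat_at_top])
  then show ?thesis using pow_shift_bigo by (rule landau_o.small_big_trans)
qed

lemma smallo_mult_lim:
  assumes "f \<in> o(h)" "(k \<longlongrightarrow> L) sequentially"
  shows "(\<lambda>n. k n * f n) \<in> o(h)"
proof -
  have "k \<in> O(\<lambda>_. 1)"
    by (rule bigoI_tendsto[of _ _ L]) (use assms(2) in simp_all)
  from landau_o.big_small_mult[OF this assms(1)] show ?thesis by simp
qed

lemma rat_exp:
  fixes A B :: "real poly"
  assumes "B \<noteq> 0" "degree A \<le> degree B"
  shows "\<exists>w. w 0 = coeff A (degree B) / lead_coeff B \<and>
    (\<lambda>n. poly A (real n) / poly B (real n) - (\<Sum>i\<le>m. w i / real n ^ i)) \<in> o(\<lambda>n. 1 / real n ^ m)"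
  using assms(2)
proof (induction m arbitrary: A)
  case 0
  let ?z = "coeff A (degree B) / lead_coeff B"
  have "((\<lambda>n. poly A (real n) / poly B (real n) - ?z) \<longlongrightarrow> ?z - ?z) sequentially"
    by (intro tendsto_intros ratio_lim assms(1) 0)
  then have "(\<lambda>n. poly A (real n) / poly B (real n) - ?z) \<in> o(\<lambda>n. 1)"
    by (intro smalloI_tendsto) auto
  then show ?case by (intro exI[of _ "\<lambda>_. ?z"]) simp
next
  case (Suc m)
  define z where "z = coeff A (degree B) / lead_coeff B"
  define C where "C = A - smult z B"
  define A' where "A' = pCons 0 C"
  have lcB: "lead_coeff B \<noteq> 0" using assms(1) by simp
  have dC: "degree C \<le> degree B"
    unfolding C_def using Suc.prems by (intro degree_diff_le) auto
  have cC: "coeff C (degree B) = 0"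
    unfolding C_def z_def using lcB by simp
  have dA': "degree A' \<le> degree B"
  proof (cases "C = 0")
    case True then show ?thesis by (simp add: A'_def)
  next
    case False
    have "degree C \<noteq> degree B" using cC False by (metis leading_coeff_0_iff)
    then have "degree C < degree B" using dC by simp
    then show ?thesis using False by (simp add: A'_def)
  qed
  obtain w' where w': "(\<lambda>n. poly A' (real n) / poly B (real n) - (\<Sum>i\<le>m. w' i / real n ^ i)) \<in> o(\<lambda>n. 1 / real n ^ m)"
    using Suc.IH[OF dA'] by blast
  define w where "w i = (if i = 0 then z else w' (i - 1))" for i
  have "(\<lambda>n. 1 / real n * (poly A' (real n) / poly B (real n) - (\<Sum>i\<le>m. w' i / real n ^ i)))
        \<in> o(\<lambda>n. 1 / real n * (1 / real n ^ m))"
    by (rule landau_o.big_small_mult[OF landau_o.big_refl w'])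
  also have "(\<lambda>n. 1 / real n * (1 / real n ^ m)) = (\<lambda>n. 1 / real n ^ Suc m)"
    by (simp add: fun_eq_iff)
  finally have *: "(\<lambda>n. 1 / real n * (poly A' (real n) / poly B (real n) - (\<Sum>i\<le>m. w' i / real n ^ i)))
        \<in> o(\<lambda>n. 1 / real n ^ Suc m)" .
  have ev: "eventually (\<lambda>n. 1 / real n * (poly A' (real n) / poly B (real n) - (\<Sum>i\<le>m. w' i / real n ^ i))
     = poly A (real n) / poly B (real n) - (\<Sum>i\<le>Suc m. w i / real n ^ i)) sequentially"
    using eventually_gt_at_top[of "0::nat"] poly_ev_nz[OF assms(1)]
  proof eventually_elim
    case (elim n)
    have s: "(\<Sum>i\<le>Suc m. w i / real n ^ i) = z + 1 / real n * (\<Sum>i\<le>m. w' i / real n ^ i)"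
      by (subst sum.atMost_Suc_shift) (simp add: w_def sum_distrib_left del: sum.atMost_Suc)
    have "poly A' (real n) / poly B (real n) = real n * (poly A (real n) / poly B (real n) - z)"
      using elim by (simp add: A'_def C_def field_simps)
    moreover have "\<And>q p T. q = real n * (p - z) \<Longrightarrow> 1 / real n * (q - T) = p - (z + 1 / real n * T)"
      using elim by (simp add: field_simps)
    ultimately show ?case unfolding s by blast
  qed
  have "w 0 = z" by (simp add: w_def)
  then show ?case using landau_o.small.in_cong[OF ev] * z_def by blast
qed

lemma shp_degree: "degree (shp c P) = degree P"
  by (simp add: shp_def degree_pcompose)
lemma shp_lead: "lead_coeff (shp c P) = lead_coeff P"
  using shp_coeff[of P "degree P" c] by (simp add: shp_degree)

lemma R2_poly_exp:
  fixes P :: "real poly"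
  assumes dP: "degree P = d" and d1: "d \<ge> 1"
  shows "\<exists>z. (\<lambda>n. poly P (real n) * poly P (real n + 2) / poly P (real n + 1) ^ 2
      - (1 - real d / real n ^ 2 + (\<Sum>i = 3..m + 2. z i / real n ^ i))) \<in> o(\<lambda>n. 1 / real n ^ (m + 2))"
proof -
  have P0: "P \<noteq> 0" using dP d1 by auto
  define S where "S = shp 1 P"
  have S0: "S \<noteq> 0" using P0 shp_lead[of 1 P] by (auto simp: S_def)
  define B where "B = S ^ 2"
  have B0: "B \<noteq> 0" using S0 by (simp add: B_def)
  have dB: "degree B = 2 * d" using S0 dP by (simp add: B_def degree_power_eq S_def shp_degree)
  have lB: "lead_coeff B = lead_coeff P ^ 2" by (simp add: B_def lead_coeff_power S_def shp_lead)
  define A where "A = pCons 0 (pCons 0 (LP P))"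
  have LPc: "degree (LP P) = 2 * d - 2" "coeff (LP P) (2 * d - 2) = real d * lead_coeff P ^ 2"
    using LP_coeff[OF dP d1] by auto
  have LP0: "LP P \<noteq> 0" using LPc P0 d1 by (metis coeff_0 leading_coeff_0_iff mult_eq_0_iff of_nat_eq_0_iff
        not_one_le_zero power_eq_0_iff)
  have e2: "2 * d = Suc (Suc (2 * d - 2))" using d1 by simp
  have dA: "degree A = 2 * d" using LP0 LPc(1) e2 by (simp add: A_def)
  have cA: "coeff A (2 * d) = real d * lead_coeff P ^ 2"
    using LPc(2) by (subst e2) (simp add: A_def)
  obtain w where w0: "w 0 = coeff A (degree B) / lead_coeff B"
    and w: "(\<lambda>n. poly A (real n) / poly B (real n) - (\<Sum>i\<le>m. w i / real n ^ i)) \<in> o(\<lambda>n. 1 / real n ^ m)"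
    using rat_exp[OF B0, of A m] dA dB by auto
  have w0': "w 0 = real d" using w0 dB cA lB P0 by simp
  define z where "z i = - w (i - 2)" for i
  have "(\<lambda>n. (- 1 / real n ^ 2) * (poly A (real n) / poly B (real n) - (\<Sum>i\<le>m. w i / real n ^ i)))
        \<in> o(\<lambda>n. 1 / real n ^ 2 * (1 / real n ^ m))"
    by (rule landau_o.big_small_mult[OF _ w]) simp
  also have "(\<lambda>n. 1 / real n ^ 2 * (1 / real n ^ m)) = (\<lambda>n. 1 / real n ^ (m + 2))"
    by (simp add: fun_eq_iff power_add power2_eq_square)
  finally have *: "(\<lambda>n. (- 1 / real n ^ 2) * (poly A (real n) / poly B (real n) - (\<Sum>i\<le>m. w i / real n ^ i)))
        \<in> o(\<lambda>n. 1 / real n ^ (m + 2))" .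
  have ev: "eventually (\<lambda>n. (- 1 / real n ^ 2) * (poly A (real n) / poly B (real n) - (\<Sum>i\<le>m. w i / real n ^ i))
     = poly P (real n) * poly P (real n + 2) / poly P (real n + 1) ^ 2
      - (1 - real d / real n ^ 2 + (\<Sum>i = 3..m + 2. z i / real n ^ i))) sequentially"
    using eventually_gt_at_top[of "0::nat"] poly_ev_nz[OF B0]
  proof eventually_elim
    case (elim n)
    define V where "V = (\<Sum>i = 1..m. w i / real n ^ i)"
    have s1: "(\<Sum>i\<le>m. w i / real n ^ i) = real d + V"
      unfolding V_def atMost_atLeast0 using w0' by (subst sum.atLeast_Suc_atMost) auto
    have X: "(\<Sum>i = 1 + 2..m + 2. z i / real n ^ i) = (\<Sum>i = 1..m. z (i + 2) / real n ^ (i + 2))"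
      by (rule sum.shift_bounds_cl_nat_ivl)
    have "(\<Sum>i = 3..m + 2. z i / real n ^ i) = (\<Sum>i = 1..m. z (i + 2) / real n ^ (i + 2))"
      using X by (simp only: one_plus_numeral semiring_norm)
    also have "\<dots> = - V / real n ^ 2"
      unfolding V_def z_def by (simp add: sum_divide_distrib power_add sum_negf[symmetric] power2_eq_square mult_ac)
    finally have s2: "(\<Sum>i = 3..m + 2. z i / real n ^ i) = - V / real n ^ 2" .
    have pA: "poly A (real n) = real n ^ 2 * (poly P (real n + 1) ^ 2 - poly P (real n) * poly P (real n + 2))"
      by (simp add: A_def power2_eq_square algebra_simps)
    have pB: "poly B (real n) = poly P (real n + 1) ^ 2"
      by (simp add: B_def S_def add.commute)
    have Y: "poly P (real n + 1) ^ 2 \<noteq> 0" using elim pB by simp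
    show ?case unfolding s1 s2 pA pB using elim Y
      by (simp add: field_simps)
  qed
  show ?thesis using landau_o.small.in_cong[OF ev] * by blast
qed



lemma alg_R2:
  fixes P0 P1 P2 a b c :: real
  assumes "P0 \<noteq> 0" "P1 \<noteq> 0" "P2 \<noteq> 0" "1 + b \<noteq> 0"
  shows "(P0 * (1 + a)) * (P2 * (1 + c)) / (P1 * (1 + b)) ^ 2 - P0 * P2 / P1 ^ 2
    = (P0 * P2 / P1 ^ 2 * (1 / (1 + b) ^ 2)) * (a + c + c * a - 2 * b - b * b)"
proof -
  define Q where "Q = P0 * P2 / P1 ^ 2"
  have h1: "(P0 * (1 + a)) * (P2 * (1 + c)) / (P1 * (1 + b)) ^ 2 = Q * ((1 + a) * (1 + c) / (1 + b) ^ 2)"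
    unfolding Q_def by (simp add: power_mult_distrib)
  have h2: "(1 + a) * (1 + c) / (1 + b) ^ 2 - 1 = (1 / (1 + b) ^ 2) * (a + c + c * a - 2 * b - b * b)"
    using assms(4) by (simp add: divide_simps) (simp add: algebra_simps power2_eq_square)
  have "Q * ((1 + a) * (1 + c) / (1 + b) ^ 2) - Q = Q * ((1 + a) * (1 + c) / (1 + b) ^ 2 - 1)"
    by (simp add: algebra_simps)
  then show ?thesis unfolding h1 h2 Q_def[symmetric] by simp
qed

lemma eps_smallo:
  fixes P :: "real poly"
  assumes dP: "degree P = d" and d1: "d \<ge> 1" and mle: "m \<le> d"
    and e: "e \<in> o(\<lambda>n. real n ^ (d - m))"
  shows "(\<lambda>n. e (n + k) / poly P (real n + real k)) \<in> o(\<lambda>n. 1 / real n ^ m)"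
proof -
  have P0: "shp (real k) P \<noteq> 0" using dP d1 shp_degree[of "real k" P] by auto
  have "(\<lambda>n. e (n + k) * (1 / poly (shp (real k) P) (real n))) \<in> o(\<lambda>n. real n ^ (d - m) * (1 / real n ^ d))"
    using landau_o.small_big_mult[OF smallo_shift[OF e] inv_poly_bigo[OF P0]]
    by (simp add: shp_degree dP)
  also have "(\<lambda>n. real n ^ (d - m) * (1 / real n ^ d)) \<in> \<Theta>(\<lambda>n. 1 / real n ^ m)"
  proof (rule bigthetaI_cong)
    show "eventually (\<lambda>n. real n ^ (d - m) * (1 / real n ^ d) = 1 / real n ^ m) sequentially"
      using eventually_gt_at_top[of "0::nat"]
    proof eventually_elim
      case (elim n)
      have "real n ^ d = real n ^ (d - m) * real n ^ m" using mle by (simp add: power_add[symmetric])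
      then show ?case using elim by simp
    qed
  qed
  finally show ?thesis by (simp add: add.commute)
qed

lemma smallo_pow_tendsto0:
  assumes "f \<in> o(\<lambda>n. 1 / real n ^ m)"
  shows "(f \<longlongrightarrow> 0) sequentially"
proof -
  have "(\<lambda>n. 1 / real n ^ m) \<in> O(\<lambda>_. 1)"
  proof (rule bigoI_tendsto)
    have "((\<lambda>n. (1 / real n) ^ m) \<longlongrightarrow> 0 ^ m) sequentially"
      by (intro tendsto_intros lim_inverse_n')
    then show "((\<lambda>n. 1 / real n ^ m / 1) \<longlongrightarrow> 0 ^ m) sequentially" by (simp add: power_one_over)
  qed simp
  from landau_o.small_big_trans[OF assms this] have "f \<in> o(\<lambda>_. 1)" .
  from smalloD_tendsto[OF this] show ?thesis by simp
qed

lemma R2_pert: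
  fixes P :: "real poly" and g :: "nat \<Rightarrow> real"
  assumes dP: "degree P = d" and d1: "d \<ge> 1" and mle: "m \<le> d"
    and eg: "(\<lambda>n. g n - poly P (real n)) \<in> o(\<lambda>n. real n ^ (d - m))"
  shows "(\<lambda>n. R2 g n - poly P (real n) * poly P (real n + 2) / poly P (real n + 1) ^ 2) \<in> o(\<lambda>n. 1 / real n ^ m)"
proof -
  define e where "e n = g n - poly P (real n)" for n
  have e: "e \<in> o(\<lambda>n. real n ^ (d - m))" using eg by (simp add: e_def[abs_def])
  define ep where "ep k n = e (n + k) / poly P (real n + real k)" for k n
  have epo: "ep k \<in> o(\<lambda>n. 1 / real n ^ m)" for k
    unfolding ep_def[abs_def] by (rule eps_smallo[OF dP d1 mle e])
  have ept: "(ep k \<longlongrightarrow> 0) sequentially" for k by (rule smallo_pow_tendsto0[OF epo])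
  define N where "N n = ep 0 n + ep 2 n + ep 2 n * ep 0 n - 2 * ep 1 n - ep 1 n * ep 1 n" for n
  have No: "N \<in> o(\<lambda>n. 1 / real n ^ m)"
    unfolding N_def[abs_def]
    by (intro sum_in_smallo epo smallo_mult_lim[OF epo ept] landau_o.small.cmult_in_iff[THEN iffD2]) auto
  define K where "K n = poly P (real n) * poly P (real n + 2) / poly P (real n + 1) ^ 2 * (1 / (1 + ep 1 n) ^ 2)" for n
  have P0: "P \<noteq> 0" using dP d1 by auto
  have "lead_coeff (shp 1 P) \<noteq> 0" using P0 shp_lead[of 1 P] by simp
  then have S1: "shp 1 P \<noteq> 0" "degree (shp 1 P) = d" "lead_coeff (shp 1 P) = lead_coeff P"
    using P0 shp_degree[of 1 P] shp_lead[of 1 P] dP by auto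
  have S2: "degree (shp 2 P) = d" "lead_coeff (shp 2 P) = lead_coeff P"
    using shp_degree[of 2 P] shp_lead[of 2 P] dP by auto
  have "((\<lambda>n. poly (P * shp 2 P) (real n) / poly (shp 1 P ^ 2) (real n)) \<longlongrightarrow>
      coeff (P * shp 2 P) (degree (shp 1 P ^ 2)) / lead_coeff (shp 1 P ^ 2)) sequentially"
    by (rule ratio_lim) (use S1 S2 P0 dP degree_mult_le[of P "shp 2 P"] in \<open>auto simp: degree_power_eq\<close>)
  moreover have "coeff (P * shp 2 P) (degree (shp 1 P ^ 2)) / lead_coeff (shp 1 P ^ 2) = 1"
  proof -
    have "degree (shp 1 P ^ 2) = d + d" using S1 by (simp add: degree_power_eq)
    moreover have "coeff (P * shp 2 P) (d + d) = lead_coeff P * lead_coeff P"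
      using coeff_mult_le[of P d "shp 2 P" d] dP S2 by simp
    moreover have "lead_coeff (shp 1 P ^ 2) = lead_coeff P ^ 2" by (simp add: lead_coeff_power S1(3))
    moreover have "lead_coeff P \<noteq> 0" using P0 by simp
    ultimately show ?thesis by (simp add: power2_eq_square)
  qed
  ultimately have R2Pt: "((\<lambda>n. poly P (real n) * poly P (real n + 2) / poly P (real n + 1) ^ 2) \<longlongrightarrow> 1) sequentially"
    by (simp add: add.commute)
  have Kt: "(K \<longlongrightarrow> 1 * (1 / (1 + 0) ^ 2)) sequentially"
    unfolding K_def[abs_def] by (intro tendsto_intros R2Pt ept) simp
  have KNo: "(\<lambda>n. K n * N n) \<in> o(\<lambda>n. 1 / real n ^ m)"
    by (rule smallo_mult_lim[OF No Kt])
  have ev: "eventually (\<lambda>n. K n * N n = R2 g n - poly P (real n) * poly P (real n + 2) / poly P (real n + 1) ^ 2) sequentially"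
  proof -
    have ev0: "eventually (\<lambda>n. poly (shp (real k) P) (real n) \<noteq> 0) sequentially" for k
      by (rule poly_ev_nz) (use shp_degree[of "real k" P] dP d1 in auto)
    have ev1': "eventually (\<lambda>n. ep 1 n > -1) sequentially"
      using ept[of 1] by (rule order_tendstoD) simp
    show ?thesis using ev0[of 0] ev0[of 1] ev0[of 2] ev1'
    proof eventually_elim
      case (elim n)
      have nz: "poly P (real n) \<noteq> 0" "poly P (real n + 1) \<noteq> 0" "poly P (real n + 2) \<noteq> 0" "1 + ep 1 n \<noteq> 0"
        using elim by (auto simp: add.commute)
      have gk: "g (n + k) = poly P (real n + real k) * (1 + ep k n)" if "poly P (real n + real k) \<noteq> 0" for k
        using that by (simp add: ep_def e_def field_simps)
      have "R2 g n = (poly P (real n) * (1 + ep 0 n)) * (poly P (real n + 2) * (1 + ep 2 n))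
          / (poly P (real n + 1) * (1 + ep 1 n)) ^ 2"
        unfolding R2_def using gk[of 0] gk[of 1] gk[of 2] nz by simp
      then show ?case unfolding K_def N_def using alg_R2[OF nz] by simp
    qed
  qed
  show ?thesis using landau_o.small.in_cong[OF ev] KNo by blast
qed

lemma Lhat_step:
  fixes P :: "real poly" and g :: "nat \<Rightarrow> real"
  assumes dP: "degree P = d" and d1: "d \<ge> 1" and m2: "m \<ge> 2" and mle: "m \<le> d"
    and eg: "(\<lambda>n. g n - poly P (real n)) \<in> o(\<lambda>n. real n ^ (d - m))"
  shows "degree (LP P) = 2 * d - 2 \<and>
    (\<lambda>n. Lhat g n - poly (LP P) (real n)) \<in> o(\<lambda>n. real n ^ ((2 * d - 2) - (m - 2)))"
proof -
  define D where "D = (2 * d - 2) - (m - 2)"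
  have DD: "d + (d - m) = D" unfolding D_def using m2 mle by simp
  define e where "e n = g n - poly P (real n)" for n
  have e: "e \<in> o(\<lambda>n. real n ^ (d - m))" using eg by (simp add: e_def[abs_def])
  have eo: "(\<lambda>n. e (n + k)) \<in> o(\<lambda>n. real n ^ (d - m))" for k by (rule smallo_shift[OF e])
  have mon: "(\<lambda>n. real n ^ (d - m)) \<in> O(\<lambda>n. real n ^ d)"
    using poly_bigo[of "monom 1 (d - m)" d] by (simp add: poly_monom degree_monom_eq)
  have eO: "(\<lambda>n. e (n + k)) \<in> O(\<lambda>n. real n ^ d)" for k
    by (rule landau_o.small_imp_big[OF landau_o.small_big_trans[OF eo mon]])
  have PO: "(\<lambda>n. poly P (real n + real k)) \<in> O(\<lambda>n. real n ^ d)" for k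
    using poly_bigo[of "shp (real k) P" d] by (simp add: shp_degree dP add.commute)
  have pw: "(\<lambda>n. real n ^ d * real n ^ (d - m)) = (\<lambda>n. real n ^ D)"
    by (simp add: power_add[symmetric] DD)
  have T1: "(\<lambda>n. poly P (real n + real k) * e (n + j)) \<in> o(\<lambda>n. real n ^ D)" for k j
    using landau_o.big_small_mult[OF PO eo] unfolding pw .
  have T2: "(\<lambda>n. e (n + k) * e (n + j)) \<in> o(\<lambda>n. real n ^ D)" for k j
    using landau_o.big_small_mult[OF eO eo] unfolding pw .
  have "(\<lambda>n. 2 * (poly P (real n + real 1) * e (n + 1)) + e (n + 1) * e (n + 1)
       - poly P (real n + real 0) * e (n + 2) - poly P (real n + real 2) * e (n + 0) - e (n + 0) * e (n + 2))
     \<in> o(\<lambda>n. real n ^ D)"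
    by (intro sum_in_smallo T1 T2 landau_o.small.cmult_in_iff[THEN iffD2]) auto
  moreover have "(\<lambda>n. 2 * (poly P (real n + real 1) * e (n + 1)) + e (n + 1) * e (n + 1)
       - poly P (real n + real 0) * e (n + 2) - poly P (real n + real 2) * e (n + 0) - e (n + 0) * e (n + 2))
     = (\<lambda>n. Lhat g n - poly (LP P) (real n))"
    by (simp add: fun_eq_iff Lhat_def e_def power2_eq_square algebra_simps)
  ultimately show ?thesis using LP_coeff[OF dP d1] D_def by simp
qed

lemma iter:
  fixes f :: "nat \<Rightarrow> real" and P0 :: "real poly"
  assumes r1: "r \<ge> 1" and lr: "l \<ge> 2 * r" and dP0: "degree P0 = l"
    and f0: "(\<lambda>n. f n - poly P0 (real n)) \<in> o(\<lambda>n. real n ^ (l - 2 * r))"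
  shows "t < r \<Longrightarrow> \<exists>P. degree P = 2 ^ t * (l - 2) + 2 \<and>
    (\<lambda>n. (Lhat ^^ t) f n - poly P (real n)) \<in> o(\<lambda>n. real n ^ ((2 ^ t * (l - 2) + 2) - 2 * (r - t)))"
proof (induction t)
  case 0
  have "l - 2 + 2 = l" using r1 lr by simp
  then show ?case using dP0 f0 by (intro exI[of _ P0]) simp
next
  case (Suc t)
  then obtain P where dP: "degree P = 2 ^ t * (l - 2) + 2"
    and gP: "(\<lambda>n. (Lhat ^^ t) f n - poly P (real n)) \<in> o(\<lambda>n. real n ^ ((2 ^ t * (l - 2) + 2) - 2 * (r - t)))"
    by auto
  have a: "l - 2 \<le> 2 ^ t * (l - 2)" using mult_le_mono1[of 1 "2 ^ t" "l - 2"] by simp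
  have mle: "2 * (r - t) \<le> 2 ^ t * (l - 2) + 2" using a lr Suc.prems by arith
  have st: "degree (LP P) = 2 * (2 ^ t * (l - 2) + 2) - 2 \<and>
    (\<lambda>n. Lhat ((Lhat ^^ t) f) n - poly (LP P) (real n))
      \<in> o(\<lambda>n. real n ^ ((2 * (2 ^ t * (l - 2) + 2) - 2) - (2 * (r - t) - 2)))"
    by (rule Lhat_step[OF dP _ _ mle gP]) (use Suc.prems in auto)
  have e1: "2 * (2 ^ t * (l - 2) + 2) - 2 = 2 ^ Suc t * (l - 2) + 2" by simp
  have e2: "2 * (r - t) - 2 = 2 * (r - Suc t)" by simp
  show ?case using st unfolding e1 e2 by (intro exI[of _ "LP P"]) simp
qed

theorem theorem4p5:
  fixes l r :: nat and f :: "nat \<Rightarrow> real" and a :: "nat \<Rightarrow> real"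
  assumes "r \<ge> 1" and "l \<ge> 2 * r" and "a l \<noteq> 0"
    and "(\<lambda>n. f n - (\<Sum>k = l - 2 * r..l. a k * real n ^ k)) \<in> o(\<lambda>n. real n ^ (l - 2 * r))"
  shows "\<forall>j \<in> {1..r}. \<exists>z :: nat \<Rightarrow> real.
    (\<lambda>n. R2 ((Lhat ^^ (j - 1)) f) n
        - (1 + (2 ^ j - 2 ^ (j - 1) * real l - 2) / real n ^ 2
             + (\<Sum>i = 3..2 * (r - j + 1). z i / real n ^ i)))
      \<in> o(\<lambda>n. 1 / real n ^ (2 * (r - j + 1)))"
proof
  fix j assume j: "j \<in> {1..r}"
  note r1 = assms(1) and lr = assms(2)
  define P0 where "P0 = (\<Sum>k = l - 2 * r..l. monom (a k) k)"
  have cP0: "coeff P0 i = (if i \<in> {l - 2 * r..l} then a i else 0)" for i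
    unfolding P0_def by (simp add: coeff_sum coeff_monom)
  have "degree P0 \<le> l" by (rule degree_le) (auto simp: cP0)
  moreover have "l \<le> degree P0" by (rule le_degree) (use assms(3) in \<open>simp add: cP0\<close>)
  ultimately have dP0: "degree P0 = l" by simp
  have pP0: "poly P0 (real n) = (\<Sum>k = l - 2 * r..l. a k * real n ^ k)" for n
    unfolding P0_def by (simp add: poly_sum poly_monom)
  have f0: "(\<lambda>n. f n - poly P0 (real n)) \<in> o(\<lambda>n. real n ^ (l - 2 * r))"
    using assms(4) by (simp add: pP0)
  define t where "t = j - 1"
  have tr: "t < r" using j by (auto simp: t_def)
  define d where "d = 2 ^ t * (l - 2) + 2"
  define m where "m = 2 * (r - t)"
  obtain P where dP: "degree P = d"
    and gP: "(\<lambda>n. (Lhat ^^ t) f n - poly P (real n)) \<in> o(\<lambda>n. real n ^ (d - m))"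
    using iter[OF r1 lr dP0 f0 tr] unfolding d_def m_def by blast
  have a: "l - 2 \<le> 2 ^ t * (l - 2)" using mult_le_mono1[of 1 "2 ^ t" "l - 2"] by simp
  have mle: "m \<le> d" using a lr tr unfolding m_def d_def by arith
  have d1: "d \<ge> 1" by (simp add: d_def)
  define m' where "m' = m - 2"
  have mm: "m' + 2 = m" "m = 2 * (r - j + 1)" using tr j unfolding m'_def m_def t_def by auto
  obtain z where z: "(\<lambda>n. poly P (real n) * poly P (real n + 2) / poly P (real n + 1) ^ 2
      - (1 - real d / real n ^ 2 + (\<Sum>i = 3..m' + 2. z i / real n ^ i))) \<in> o(\<lambda>n. 1 / real n ^ (m' + 2))"
    using R2_poly_exp[OF dP d1, of m'] by blast
  have pert: "(\<lambda>n. R2 ((Lhat ^^ t) f) n - poly P (real n) * poly P (real n + 2) / poly P (real n + 1) ^ 2)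
     \<in> o(\<lambda>n. 1 / real n ^ m)"
    by (rule R2_pert[OF dP d1 mle gP])
  have H: "(\<lambda>n. (R2 ((Lhat ^^ t) f) n - poly P (real n) * poly P (real n + 2) / poly P (real n + 1) ^ 2)
     + (poly P (real n) * poly P (real n + 2) / poly P (real n + 1) ^ 2
      - (1 - real d / real n ^ 2 + (\<Sum>i = 3..m' + 2. z i / real n ^ i)))) \<in> o(\<lambda>n. 1 / real n ^ m)"
  proof (rule sum_in_smallo(1)[OF pert])
    have "(\<lambda>n. 1 / real n ^ (m' + 2)) = (\<lambda>n. 1 / real n ^ m)" using mm by simp
    then show "(\<lambda>n. poly P (real n) * poly P (real n + 2) / poly P (real n + 1) ^ 2
      - (1 - real d / real n ^ 2 + (\<Sum>i = 3..m' + 2. z i / real n ^ i))) \<in> o(\<lambda>n. 1 / real n ^ m)"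
      using z by simp
  qed
  have dval: "real d = - (2 ^ j - 2 ^ (j - 1) * real l - 2)"
  proof -
    have "j = Suc t" using j by (auto simp: t_def)
    moreover have "real (l - 2) = real l - 2" using r1 lr by (simp add: of_nat_diff)
    ultimately show ?thesis by (simp add: d_def algebra_simps)
  qed
  have em: "2 * (r - j + 1) = m" using mm by simp
  have tj: "t = j - 1" by (simp add: t_def)
  have eq: "\<forall>\<^sub>F n in sequentially.
     (R2 ((Lhat ^^ t) f) n - poly P (real n) * poly P (real n + 2) / poly P (real n + 1) ^ 2)
     + (poly P (real n) * poly P (real n + 2) / poly P (real n + 1) ^ 2
      - (1 - real d / real n ^ 2 + (\<Sum>i = 3..m. z i / real n ^ i)))
   = R2 ((Lhat ^^ (j - 1)) f) n
        - (1 + (2 ^ j - 2 ^ (j - 1) * real l - 2) / real n ^ 2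
             + (\<Sum>i = 3..m. z i / real n ^ i))"
  proof (rule always_eventually, rule allI)
    fix n
    have "real d / real n ^ 2 = - ((2 ^ j - 2 ^ (j - 1) * real l - 2) / real n ^ 2)"
      unfolding dval by (simp add: minus_divide_left)
    then show "(R2 ((Lhat ^^ t) f) n - poly P (real n) * poly P (real n + 2) / poly P (real n + 1) ^ 2)
     + (poly P (real n) * poly P (real n + 2) / poly P (real n + 1) ^ 2
      - (1 - real d / real n ^ 2 + (\<Sum>i = 3..m. z i / real n ^ i)))
     = R2 ((Lhat ^^ (j - 1)) f) n
        - (1 + (2 ^ j - 2 ^ (j - 1) * real l - 2) / real n ^ 2
             + (\<Sum>i = 3..m. z i / real n ^ i))"
      unfolding tj by (simp del: sum.cl_ivl_Suc)
  qed
  show "\<exists>z :: nat \<Rightarrow> real.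
    (\<lambda>n. R2 ((Lhat ^^ (j - 1)) f) n
        - (1 + (2 ^ j - 2 ^ (j - 1) * real l - 2) / real n ^ 2
             + (\<Sum>i = 3..2 * (r - j + 1). z i / real n ^ i)))
      \<in> o(\<lambda>n. 1 / real n ^ (2 * (r - j + 1)))"
    unfolding em using landau_o.small.in_cong[OF eq] H[unfolded mm(1)] by blast
qed

end
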